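(* Let $P$ be a simplicial polyhedron of genus zero. Then the lattice graph of $P$ contains a facet cycle.
   Context: A simplicial polyhedron is a polyhedron in $\mathbb{R}^3$ all of whose faces (facets) are triangles. The lattice graph $G$ of $P$ has one node for each facet, each edge and each vertex of $P$, with an arc for each incidence between these faces. A facet path in $G$ is a path that alternates between vertex nodes and facet nodes, includes each facet exactly once, and never repeats the same vertex twice in a row; thus in a subpath $(\ldots, v_1, f, v_2, \ldots)$, $v_1$ and $v_2$ are distinct vertices of the facet $f$. A facet cycle is a facet path that is also a cycle (closed). *)

theory Defs
  imports Main
begin

text \<open>A simplicial polyhedron is represented combinatorially by its set of facets
  F, each facet being the 3-element set of its vertices.\<close>

definition poly_vertices :: "'a set set \<Rightarrow> 'a set" where
  "poly_vertices F = \<Union>F"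

definition poly_edges :: "'a set set \<Rightarrow> 'a set set" where
  "poly_edges F = {e. card e = 2 \<and> (\<exists>f\<in>F. e \<subseteq> f)}"

definition facet_adj :: "'a set set \<Rightarrow> ('a set \<times> 'a set) set" where
  "facet_adj F = {(f, g). f \<in> F \<and> g \<in> F \<and> card (f \<inter> g) = 2}"

definition vertex_star_adj :: "'a set set \<Rightarrow> 'a \<Rightarrow> ('a set \<times> 'a set) set" where
  "vertex_star_adj F v = {(f, g). f \<in> F \<and> g \<in> F \<and> v \<in> f \<and> v \<in> g \<and> card (f \<inter> g) = 2}"

text \<open>A closed connected triangulated surface (closed 2-manifold whose faces are triangles):
  every edge lies in exactly two facets, the link of every vertex is connected
  (hence a single cycle), and the surface is connected.\<close>
definition simplicial_surface :: "'a set set \<Rightarrow> bool" where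
  "simplicial_surface F \<longleftrightarrow>
     finite F \<and> F \<noteq> {} \<and>
     (\<forall>f\<in>F. card f = 3) \<and>
     (\<forall>e\<in>poly_edges F. card {f\<in>F. e \<subseteq> f} = 2) \<and>
     (\<forall>v\<in>poly_vertices F. \<forall>f\<in>F. \<forall>g\<in>F. v \<in> f \<longrightarrow> v \<in> g \<longrightarrow>
          (f, g) \<in> (vertex_star_adj F v)\<^sup>*) \<and>
     (\<forall>f\<in>F. \<forall>g\<in>F. (f, g) \<in> (facet_adj F)\<^sup>*)"

definition euler_char :: "'a set set \<Rightarrow> int" where
  "euler_char F = int (card (poly_vertices F)) - int (card (poly_edges F)) + int (card F)"

text \<open>Genus zero: for a closed connected surface, Euler characteristic 2 - 2g = 2.\<close>
definition simplicial_polyhedron_genus0 :: "'a set set \<Rightarrow> bool" where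
  "simplicial_polyhedron_genus0 F \<longleftrightarrow> simplicial_surface F \<and> euler_char F = 2"

text \<open>Lattice graph: nodes are the faces (vertex v as the singleton {v}, edges, facets);
  arcs are the incidences (proper containment).\<close>
definition lattice_nodes :: "'a set set \<Rightarrow> 'a set set" where
  "lattice_nodes F = (\<lambda>v. {v}) ` poly_vertices F \<union> poly_edges F \<union> F"

definition lattice_arc :: "'a set set \<Rightarrow> 'a set \<Rightarrow> 'a set \<Rightarrow> bool" where
  "lattice_arc F x y \<longleftrightarrow> x \<in> lattice_nodes F \<and> y \<in> lattice_nodes F \<and>
     (x \<subset> y \<or> y \<subset> x)"

definition is_vertex_node :: "'a set set \<Rightarrow> 'a set \<Rightarrow> bool" where
  "is_vertex_node F x \<longleftrightarrow> (\<exists>v\<in>poly_vertices F. x = {v})"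

text \<open>A facet cycle: a closed walk w_0 w_1 ... w_(2n-1) (w_(2n) = w_0) in the lattice graph,
  alternating vertex nodes (even positions) and facet nodes (odd positions),
  containing every facet exactly once, and with the two vertices around each facet distinct.\<close>
definition facet_cycle :: "'a set set \<Rightarrow> 'a set list \<Rightarrow> bool" where
  "facet_cycle F w \<longleftrightarrow>
     (let m = length w in
       m > 0 \<and> even m \<and>
       (\<forall>i<m. lattice_arc F (w ! i) (w ! ((i + 1) mod m))) \<and>
       (\<forall>i<m. even i \<longrightarrow> is_vertex_node F (w ! i)) \<and>
       (\<forall>i<m. odd i \<longrightarrow> w ! i \<in> F) \<and>
       (\<forall>f\<in>F. card {i. i < m \<and> odd i \<and> w ! i = f} = 1) \<and>
       (\<forall>i<m. even i \<longrightarrow> w ! i \<noteq> w ! ((i + 2) mod m)))"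

end

theory Submission
  imports Defs
begin

fun trip :: "'a \<Rightarrow> ('a set \<times> 'a) list \<Rightarrow> ('a \<times> 'a set \<times> 'a) list" where
  "trip v [] = []"
| "trip v ((f,u)#r) = (v,f,u) # trip u r"

definition okw :: "'a \<Rightarrow> ('a set \<times> 'a) list \<Rightarrow> bool" where
  "okw v xs \<longleftrightarrow> (\<forall>(a,f,b) \<in> set (trip v xs). a \<in> f \<and> b \<in> f \<and> a \<noteq> b)"

definition cyc :: "'a set set \<Rightarrow> 'a set set \<Rightarrow> 'a \<Rightarrow> ('a set \<times> 'a) list \<Rightarrow> bool" where
  "cyc F S v xs \<longleftrightarrow> xs \<noteq> [] \<and> okw v xs \<and> snd (last xs) = v \<and> distinct (map fst xs)
     \<and> set (map fst xs) = S \<and> S \<subseteq> F"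

definition pt :: "'a \<Rightarrow> ('a set \<times> 'a) list \<Rightarrow> 'a set \<Rightarrow> 'a set \<Rightarrow> bool" where
  "pt v xs K h \<longleftrightarrow> (\<exists>a b. (a,K,b) \<in> set (trip v xs) \<and> a \<in> h \<and> b \<in> h)"

fun chainP :: "('a set \<Rightarrow> 'a set \<Rightarrow> bool) \<Rightarrow> 'a set \<Rightarrow> 'a set list \<Rightarrow> bool" where
  "chainP P g [] = True"
| "chainP P g (f#cs) = (P f g \<and> chainP P f cs)"

fun sh :: "'a set \<Rightarrow> 'a set list \<Rightarrow> 'a set \<Rightarrow> 'a set" where
  "sh g [] x = x"
| "sh g (f#cs) x = (if x = f then g else sh f cs x)"

lemma trip_append: "trip v (ys @ zs) = trip v ys @ trip (last (v # map snd ys)) zs"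
  by (induction v ys rule: trip.induct) auto

lemma trip_len: "length (trip v xs) = length xs"
  by (induction v xs rule: trip.induct) auto

lemma trip_nth: "j < length xs \<Longrightarrow> trip v xs ! j = ((v # map snd xs) ! j, fst (xs!j), snd (xs!j))"
proof (induction v xs arbitrary: j rule: trip.induct)
  case (1 v) then show ?case by simp
next
  case (2 v f u r) then show ?case by (cases j) auto
qed

lemma trip_mem: "(a,f,b) \<in> set (trip v xs) \<Longrightarrow> f \<in> fst ` set xs \<and> b \<in> snd ` set xs"
  by (induction v xs rule: trip.induct) force+

lemma trip_exists: "f \<in> fst ` set xs \<Longrightarrow> \<exists>a b. (a,f,b) \<in> set (trip v xs)"
  by (induction v xs rule: trip.induct) force+

lemma trip_unique: "distinct (map fst xs) \<Longrightarrow> (a,f,b) \<in> set (trip v xs) \<Longrightarrow> (a',f,b') \<in> set (trip v xs)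
   \<Longrightarrow> a = a' \<and> b = b'"
  by (induction v xs rule: trip.induct) (auto dest: trip_mem)

lemma trip_decomp: "(a,f,b) \<in> set (trip v xs) \<Longrightarrow> \<exists>ys zs. xs = ys @ (f,b) # zs \<and> last (v # map snd ys) = a"
proof (induction v xs rule: trip.induct)
  case (1 v) then show ?case by simp
next
  case (2 v g u r)
  show ?case
  proof (cases "(a,f,b) = (v,g,u)")
    case True then show ?thesis by (rule_tac x="[]" in exI) auto
  next
    case False
    then have "(a,f,b) \<in> set (trip u r)" using 2 by auto
    then obtain ys zs where "r = ys @ (f,b) # zs" "last (u # map snd ys) = a" using 2 by blast
    then show ?thesis by (rule_tac x="(g,u)#ys" in exI) auto
  qed
qed

lemma trip_map: "trip v (map (\<lambda>(f,u). (\<sigma> f, u)) xs) = map (\<lambda>(a,f,b). (a, \<sigma> f, b)) (trip v xs)"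
  by (induction v xs rule: trip.induct) auto

lemma trip_map_mem: "(a,K,b) \<in> set (map (\<lambda>(a,f,b). (a, \<sigma> f, b)) T) \<Longrightarrow> \<exists>x. (a,x,b) \<in> set T \<and> K = \<sigma> x"
  by auto

lemma map_snd_apfst: "map snd (map (\<lambda>(f,u). (\<sigma> f, u)) xs) = map snd xs"
  by (induction xs) auto

lemma sh_notin: "x \<notin> set cs \<Longrightarrow> sh g cs x = x"
  by (induction g cs x rule: sh.induct) auto

lemma sh_inj: "distinct (g#cs) \<Longrightarrow> set cs \<subseteq> T \<Longrightarrow> g \<notin> T \<Longrightarrow>
   inj_on (sh g cs) T \<and> sh g cs ` T \<subseteq> insert g T \<and> last (g#cs) \<notin> sh g cs ` T"
proof (induction cs arbitrary: g T)
  case Nil then show ?case by auto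
next
  case (Cons f cs)
  have IH: "inj_on (sh f cs) (T - {f}) \<and> sh f cs ` (T - {f}) \<subseteq> insert f (T - {f}) \<and> last (f#cs) \<notin> sh f cs ` (T - {f})"
    using Cons.prems by (intro Cons.IH) auto
  have fT: "f \<in> T" using Cons.prems by auto
  have lT: "last (f#cs) \<in> T" using Cons.prems last_in_set[of "f#cs"] by auto
  show ?case
  proof (intro conjI)
    show "inj_on (sh g (f # cs)) T"
    proof (rule inj_onI)
      fix x y assume xy: "x \<in> T" "y \<in> T" "sh g (f # cs) x = sh g (f # cs) y"
      show "x = y"
      proof (cases "x = f"; cases "y = f")
        assume "x \<noteq> f" "y \<noteq> f" then show ?thesis using xy IH by (auto simp: inj_on_def)
      next
        assume "x = f" "y \<noteq> f"
        then have "g = sh f cs y" using xy by auto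
        moreover have "sh f cs y \<in> T" using IH xy \<open>y \<noteq> f\<close> fT by auto
        ultimately show ?thesis using Cons.prems by auto
      next
        assume "x \<noteq> f" "y = f"
        then have "g = sh f cs x" using xy by auto
        moreover have "sh f cs x \<in> T" using IH xy \<open>x \<noteq> f\<close> fT by auto
        ultimately show ?thesis using Cons.prems by auto
      qed auto
    qed
    show "sh g (f # cs) ` T \<subseteq> insert g T" using IH fT by auto
    show "last (g # f # cs) \<notin> sh g (f # cs) ` T"
    proof
      assume "last (g # f # cs) \<in> sh g (f # cs) ` T"
      then obtain x where x: "x \<in> T" "last (g#f#cs) = sh g (f#cs) x" by (rule imageE) auto
      then have x2: "last (f#cs) = sh g (f#cs) x" by simp
      show False
      proof (cases "x = f")
        case True then show False using x2 lT Cons.prems by auto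
      next
        case False then show False using x x2 IH by auto
      qed
    qed
  qed
qed

lemma sh_neq: "distinct (g#cs) \<Longrightarrow> x \<in> set cs \<Longrightarrow> sh g cs x \<noteq> x"
  by (induction g cs x rule: sh.induct) auto

lemma sh_in: "chainP P g cs \<Longrightarrow> x \<in> set cs \<Longrightarrow> P x (sh g cs x)"
  by (induction g cs x rule: sh.induct) auto

lemma chain_snoc: "chainP P g (cs @ [x]) = (chainP P g cs \<and> P x (last (g#cs)))"
  by (induction P g cs rule: chainP.induct) auto

lemma surf_fin: "simplicial_surface F \<Longrightarrow> finite F"
  by (simp add: simplicial_surface_def)

lemma surf_c3: "simplicial_surface F \<Longrightarrow> f \<in> F \<Longrightarrow> card f = 3"
  by (simp add: simplicial_surface_def)

lemma surf_e2: "simplicial_surface F \<Longrightarrow> f \<in> F \<Longrightarrow> e \<subseteq> f \<Longrightarrow> card e = 2 \<Longrightarrow> card {f\<in>F. e \<subseteq> f} = 2"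
  unfolding simplicial_surface_def poly_edges_def by blast

lemma surf_other: assumes "simplicial_surface F" "f \<in> F" "e \<subseteq> f" "card e = 2"
  shows "\<exists>K\<in>F. e \<subseteq> K \<and> K \<noteq> f"
proof (rule ccontr)
  assume "\<not> ?thesis"
  then have "{f\<in>F. e \<subseteq> f} \<subseteq> {f}" by auto
  then have "card {f\<in>F. e \<subseteq> f} \<le> card {f}" by (intro card_mono) auto
  then have "card {f\<in>F. e \<subseteq> f} \<le> 1" by simp
  then show False using surf_e2[OF assms] by simp
qed

lemma surf_no3: assumes "simplicial_surface F" "x \<in> F" "y \<in> F" "z \<in> F" "a \<in> x" "b \<in> x" "a \<in> y" "b \<in> y"
   "a \<in> z" "b \<in> z" "a \<noteq> b" "x \<noteq> y" "x \<noteq> z" "y \<noteq> z"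
  shows False
proof -
  have c: "card {f\<in>F. {a,b} \<subseteq> f} = 2" using assms by (intro surf_e2[of F x]) auto
  have "{x,y,z} \<subseteq> {f\<in>F. {a,b} \<subseteq> f}" using assms by auto
  moreover have "finite {f\<in>F. {a,b} \<subseteq> f}" using surf_fin[OF assms(1)] by auto
  ultimately have "card {x,y,z} \<le> 2" using c card_mono by metis
  then show False using assms by auto
qed

lemma card3_eq: assumes "card t = 3" "card K = 3" "t \<subseteq> K" shows "t = K"
proof -
  have "finite K" using assms(2) by (intro card_ge_0_finite) simp
  then show ?thesis using assms card_subset_eq by metis
qed

lemma card3_third: assumes "card t = 3" shows "\<exists>r\<in>t. r \<noteq> a \<and> r \<noteq> b"
proof (rule ccontr)
  assume "\<not> ?thesis"
  then have "t \<subseteq> {a,b}" by auto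
  then have "card t \<le> card {a,b}" by (intro card_mono) auto
  moreover have "card {a,b} \<le> 2" by (cases "a = b") auto
  ultimately have "card t \<le> 2" by simp
  then show False using assms by simp
qed

lemma M1:
  assumes surf: "simplicial_surface F" and c: "cyc F S v xs" and h: "h \<in> F" "h \<notin> S"
    and tr: "(a,K,b) \<in> set (trip v xs)" and E: "E \<subseteq> K" "E \<subseteq> h" "card E = 2"
    and nab: "\<not> (a \<in> h \<and> b \<in> h)"
  shows "\<exists>v' xs'. cyc F (insert h S) v' xs'"
proof -
  obtain ys zs where xs: "xs = ys @ (K,b) # zs" and la: "last (v # map snd ys) = a"
    using trip_decomp[OF tr] by blast
  have KS: "K \<in> S" using c tr trip_mem[OF tr] by (auto simp: cyc_def)
  have KF: "K \<in> F" using KS c by (auto simp: cyc_def)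
  have ok: "a \<in> K" "b \<in> K" "a \<noteq> b" using c tr by (auto simp: cyc_def okw_def)
  have cK: "card K = 3" using surf_c3[OF surf KF] .
  obtain p where p: "p \<in> K" "p \<noteq> a" "p \<noteq> b" using card3_third[OF cK] by blast
  have Kabp: "K = {a,b,p}" using card3_eq[of "{a,b,p}" K] ok p cK by auto
  have pE: "p \<in> E"
  proof (rule ccontr)
    assume "p \<notin> E"
    then have "E \<subseteq> {a,b}" using E Kabp by auto
    moreover have "card {a,b} = 2" using ok by simp
    ultimately have "E = {a,b}" using E(3) card_subset_eq[of "{a,b}" E] by simp
    then show False using E nab by auto
  qed
  have "\<exists>y\<in>E. y \<noteq> p" using E(3) unfolding card_2_iff by auto
  then have ab: "a \<in> h \<or> b \<in> h" using E Kabp by auto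
  have ph: "p \<in> h" using pE E by auto
  have dist: "distinct (map fst ys @ K # map fst zs)" and setS: "set (map fst ys @ K # map fst zs) = S"
    using c xs by (auto simp: cyc_def)
  have okys: "okw v ys" and okzs: "okw b zs"
    using c xs la by (auto simp: cyc_def okw_def trip_append)
  have lastv: "snd (last (ys @ (K,b) # zs)) = v" using c xs by (simp add: cyc_def)
  show ?thesis
  proof (cases "b \<in> h")
    case True
    define xs' where "xs' = ys @ (K,p) # (h,b) # zs"
    have "cyc F (insert h S) v xs'"
      unfolding cyc_def
    proof (intro conjI)
      show "xs' \<noteq> []" by (simp add: xs'_def)
      show "okw v xs'" using okys okzs ok p True ph la
        by (auto simp: xs'_def okw_def trip_append)
      show "snd (last xs') = v" using lastv by (cases "zs = []") (auto simp: xs'_def)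
      show "distinct (map fst xs')" using dist h setS by (auto simp: xs'_def)
      show "set (map fst xs') = insert h S" using setS by (auto simp: xs'_def)
      show "insert h S \<subseteq> F" using c h by (auto simp: cyc_def)
    qed
    then show ?thesis by blast
  next
    case False
    then have aH: "a \<in> h" using ab by auto
    define xs' where "xs' = ys @ (h,p) # (K,b) # zs"
    have "cyc F (insert h S) v xs'"
      unfolding cyc_def
    proof (intro conjI)
      show "xs' \<noteq> []" by (simp add: xs'_def)
      show "okw v xs'" using okys okzs ok p aH ph la
        by (auto simp: xs'_def okw_def trip_append)
      show "snd (last xs') = v" using lastv by (cases "zs = []") (auto simp: xs'_def)
      show "distinct (map fst xs')" using dist h setS by (auto simp: xs'_def)
      show "set (map fst xs') = insert h S" using setS by (auto simp: xs'_def)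
      show "insert h S \<subseteq> F" using c h by (auto simp: cyc_def)
    qed
    then show ?thesis by blast
  qed
qed

lemma M0:
  assumes c: "cyc F S v xs" and h: "h \<in> F" "h \<notin> S" and K: "K \<in> F" "K \<notin> S" "h \<noteq> K"
    and pq: "p \<in> h" "q \<in> h" "p \<in> K" "q \<in> K" "p \<noteq> q" and ps: "p \<in> snd ` set xs"
  shows "\<exists>v' xs'. cyc F (insert h (insert K S)) v' xs'"
proof -
  obtain X where "(X,p) \<in> set xs" using ps by auto
  then obtain ys zs where xs: "xs = ys @ (X,p) # zs" by (metis split_list)
  define a where "a = last (v # map snd ys)"
  have dist: "distinct (map fst ys @ X # map fst zs)" and setS: "set (map fst ys @ X # map fst zs) = S"
    using c xs by (auto simp: cyc_def)
  have okys: "okw v ys" and okzs: "okw p zs" and okX: "a \<in> X" "p \<in> X" "a \<noteq> p"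
    using c xs by (auto simp: cyc_def okw_def trip_append a_def)
  have lastv: "snd (last (ys @ (X,p) # zs)) = v" using c xs by (simp add: cyc_def)
  define xs' where "xs' = ys @ (X,p) # (h,q) # (K,p) # zs"
  have "cyc F (insert h (insert K S)) v xs'"
    unfolding cyc_def
  proof (intro conjI)
    show "xs' \<noteq> []" by (simp add: xs'_def)
    have "trip v xs' = trip v ys @ (a,X,p) # (p,h,q) # (q,K,p) # trip p zs"
      by (simp add: xs'_def trip_append a_def)
    then show "okw v xs'" using okys okzs okX pq
      unfolding okw_def by auto
    show "snd (last xs') = v" using lastv by (cases "zs = []") (auto simp: xs'_def)
    show "distinct (map fst xs')" using dist h K setS by (auto simp: xs'_def)
    show "set (map fst xs') = insert h (insert K S)" using setS by (auto simp: xs'_def)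
    show "insert h (insert K S) \<subseteq> F" using c h K by (auto simp: cyc_def)
  qed
  then show ?thesis by blast
qed


lemma rtrancl_cross: "(x,y) \<in> R\<^sup>* \<Longrightarrow> x \<in> S \<Longrightarrow> y \<notin> S \<Longrightarrow> \<exists>u w. (u,w) \<in> R \<and> u \<in> S \<and> w \<notin> S"
  by (induction rule: rtrancl_induct) auto

lemma step:
  assumes surf: "simplicial_surface F" and c: "cyc F S v xs" and ne: "S \<noteq> F"
  shows "\<exists>S' v' xs'. cyc F S' v' xs' \<and> card S < card S'"
proof -
  have SF: "S \<subseteq> F" using c by (simp add: cyc_def)
  have finF: "finite F" using surf by (rule surf_fin)
  have finS: "finite S" using SF finF finite_subset by blast
  have Sne: "S \<noteq> {}" using c by (auto simp: cyc_def)
  obtain f0 g0 where f0: "f0 \<in> S" and g0: "g0 \<in> F" "g0 \<notin> S" using Sne ne SF by blast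
  have "(f0,g0) \<in> (facet_adj F)\<^sup>*" using surf f0 g0 SF unfolding simplicial_surface_def by blast
  then obtain f g where fg: "(f,g) \<in> facet_adj F" "f \<in> S" "g \<notin> S" using rtrancl_cross[of f0 g0 "facet_adj F" S] f0 g0 by blast
  then have gF: "g \<in> F" and cfg: "card (f \<inter> g) = 2" by (auto simp: facet_adj_def)
  define Q where "Q k \<longleftrightarrow> (\<exists>cs. length cs = k \<and> chainP (pt v xs) g cs \<and> distinct cs \<and> set cs \<subseteq> S)" for k
  have Q0: "Q 0" by (auto simp: Q_def)
  have Qb: "\<forall>k. Q k \<longrightarrow> k \<le> card S"
  proof (intro allI impI)
    fix k assume "Q k"
    then obtain cs where "length cs = k" "distinct cs" "set cs \<subseteq> S" by (auto simp: Q_def)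
    then have "k = card (set cs)" by (simp add: distinct_card)
    also have "\<dots> \<le> card S" using \<open>set cs \<subseteq> S\<close> finS by (rule card_mono[rotated])
    finally show "k \<le> card S" .
  qed
  have "{k. Q k} \<subseteq> {..card S}" using Qb by blast
  then have finQ: "finite {k. Q k}" using finite_subset by blast
  define k where "k = Max {k. Q k}"
  have Qk: "Q k" unfolding k_def using Max_in[OF finQ] Q0 by blast
  have kmax: "\<forall>k'. Q k' \<longrightarrow> k' \<le> k" unfolding k_def using Max_ge[OF finQ] by blast
  obtain cs where cs: "length cs = k" "chainP (pt v xs) g cs" "distinct cs" "set cs \<subseteq> S"
    using Qk by (auto simp: Q_def)
  have ext: False if "x \<in> S" "x \<notin> set cs" "pt v xs x (last (g#cs))" for x
  proof -
    have "Q (k+1)" unfolding Q_def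
      using cs that by (intro exI[of _ "cs @ [x]"]) (simp add: chain_snoc)
    then have "k + 1 \<le> k" using kmax by blast
    then show False by simp
  qed
  have distS: "distinct (map fst xs)" and setS: "set (map fst xs) = S" and okS: "okw v xs"
    using c by (auto simp: cyc_def)
  show ?thesis
  proof (cases "cs = []")
    case True
    have "f \<in> fst ` set xs" using setS fg(2) by (metis set_map)
    then obtain a b where tr: "(a,f,b) \<in> set (trip v xs)" using trip_exists[of f xs v] by blast
    have nab: "\<not> (a \<in> g \<and> b \<in> g)"
    proof
      assume "a \<in> g \<and> b \<in> g"
      then have "pt v xs f g" using tr by (auto simp: pt_def)
      then show False using ext[of f] fg(2) True by simp
    qed
    obtain v' xs' where "cyc F (insert g S) v' xs'"
      using M1[OF surf c gF fg(3) tr _ _ cfg nab] by blast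
    moreover have "card S < card (insert g S)" using finS fg by simp
    ultimately show ?thesis by blast
  next
    case False
    define t where "t = last cs"
    have tl: "last (g#cs) = t" using False by (simp add: t_def)
    have tS: "t \<in> S" using False cs by (auto simp: t_def)
    have tF: "t \<in> F" using tS SF by auto
    have gS: "g \<notin> S" using fg by simp
    have dgc: "distinct (g#cs)" using cs gS by auto
    define \<sigma> where "\<sigma> = sh g cs"
    have shp: "inj_on \<sigma> S" "\<sigma> ` S \<subseteq> insert g S" "t \<notin> \<sigma> ` S"
      using sh_inj[OF dgc cs(4) gS] tl by (auto simp: \<sigma>_def)
    define xs' where "xs' = map (\<lambda>(f,u). (\<sigma> f, u)) xs"
    have trip': "trip v xs' = map (\<lambda>(a,f,b). (a, \<sigma> f, b)) (trip v xs)"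
      unfolding xs'_def by (rule trip_map)
    have inS: "a \<in> \<sigma> x \<and> b \<in> \<sigma> x" if "(a,x,b) \<in> set (trip v xs)" for a x b
    proof (cases "x \<in> set cs")
      case True
      then have "pt v xs x (\<sigma> x)" using sh_in[OF cs(2)] by (simp add: \<sigma>_def)
      then obtain a' b' where "(a',x,b') \<in> set (trip v xs)" "a' \<in> \<sigma> x" "b' \<in> \<sigma> x" by (auto simp: pt_def)
      then show ?thesis using trip_unique[OF distS that] by auto
    next
      case False
      then show ?thesis using that okS by (auto simp: sh_notin \<sigma>_def okw_def)
    qed
    have c': "cyc F (\<sigma> ` S) v xs'"
      unfolding cyc_def
    proof (intro conjI)
      have xsne: "xs \<noteq> []" using c by (simp add: cyc_def)
      then show xne: "xs' \<noteq> []" by (simp add: xs'_def)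
      show "okw v xs'" unfolding okw_def trip' using inS okS by (auto simp: okw_def)
      have ms: "map snd xs' = map snd xs" unfolding xs'_def by (rule map_snd_apfst)
      have "snd (last xs') = last (map snd xs')" using xne by (simp add: last_map)
      also have "\<dots> = last (map snd xs)" using ms by simp
      also have "\<dots> = snd (last xs)" using xsne by (simp add: last_map)
      finally show "snd (last xs') = v" using c by (simp add: cyc_def)
      have mf: "map fst xs' = map \<sigma> (map fst xs)" unfolding xs'_def by (induction xs) auto
      moreover have "inj_on \<sigma> (set (map fst xs))" using shp(1) setS by simp
      ultimately show "distinct (map fst xs')" using distinct_map[THEN iffD2, OF conjI[OF distS]] by simp
      show "set (map fst xs') = \<sigma> ` S" using setS mf by (metis set_map)
      show "\<sigma> ` S \<subseteq> F" using shp SF gF by auto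
    qed
    have cardS': "card (\<sigma> ` S) = card S" using card_image[OF shp(1)] .
    have finS': "finite (\<sigma> ` S)" using finS by simp
    have "t \<in> fst ` set xs" using setS tS by (metis set_map)
    then obtain at bt where trt: "(at,t,bt) \<in> set (trip v xs)" using trip_exists[of t xs v] by blast
    have okt: "at \<in> t" "bt \<in> t" "at \<noteq> bt" using bspec[OF okS[unfolded okw_def] trt] by simp_all
    have ct: "card t = 3" using surf_c3[OF surf tF] .
    obtain r where r: "r \<in> t" "r \<noteq> at" "r \<noteq> bt" using card3_third[OF ct] by blast
    have tabr: "t = {at,bt,r}" using card3_eq[of "{at,bt,r}" t] okt r ct by auto
    obtain K where K: "K \<in> F" "{bt,r} \<subseteq> K" "K \<noteq> t"
      using surf_other[OF surf tF, of "{bt,r}"] okt r by auto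
    have cE: "card {bt,r} = 2" using r by auto
    have setS': "set (map fst xs') = \<sigma> ` S" and okS': "okw v xs'" using c' by (simp_all add: cyc_def)
    show ?thesis
    proof (cases "K \<in> \<sigma> ` S")
      case True
      have "K \<in> fst ` set xs'" using True setS' by simp
      then obtain a b where trK: "(a,K,b) \<in> set (trip v xs')" using trip_exists[of K xs' v] by blast
      show ?thesis
      proof (cases "a \<in> t \<and> b \<in> t")
        case False
        obtain v'' xs'' where "cyc F (insert t (\<sigma> ` S)) v'' xs''"
          using M1[OF surf c' tF shp(3) trK K(2) _ cE False] okt(2) r(1) by blast
        moreover have "card S < card (insert t (\<sigma> ` S))" using finS' shp cardS' by simp
        ultimately show ?thesis by blast
      next
        case True
        have okK: "a \<in> K" "b \<in> K" using bspec[OF okS'[unfolded okw_def] trK] by simp_all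
        have "\<exists>x. (a,x,b) \<in> set (trip v xs) \<and> K = \<sigma> x" using trip_map_mem[OF trK[unfolded trip']] .
        then obtain x where trx: "(a,x,b) \<in> set (trip v xs)" and Kx: "K = \<sigma> x" by (elim exE conjE)
        have okx: "a \<in> x" "b \<in> x" "a \<noteq> b" using bspec[OF okS[unfolded okw_def] trx] by simp_all
        have xS: "x \<in> S" using trip_mem[OF trx] setS by auto
        have False
        proof (cases "x \<in> set cs")
          case False
          then have "pt v xs x t" using True trx by (auto simp: pt_def)
          then show False using ext[of x] xS False tl by auto
        next
          case xin: True
          show False
          proof (cases "x = t")
            case True
            then have "a = at" "b = bt" using trip_unique[OF distS trx] trt by auto
            then have "t \<subseteq> K" using okK K tabr by auto
            then have "t = K" using card3_eq[OF ct surf_c3[OF surf K(1)]] by blast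
            then show False using K by simp
          next
            case False
            have "K \<noteq> x" using sh_neq[OF dgc xin] Kx by (simp add: \<sigma>_def)
            have tt: "a \<in> t" "b \<in> t" using \<open>a \<in> t \<and> b \<in> t\<close> by auto
            show False using surf_no3[OF surf xS[THEN subsetD[OF SF]] K(1) tF okx(1,2) okK tt okx(3)]
              \<open>K \<noteq> x\<close> False K(3) by blast
          qed
        qed
        then show ?thesis ..
      qed
    next
      case False
      have "map snd xs' = map snd xs" unfolding xs'_def by (rule map_snd_apfst)
      then have "snd ` set xs' = snd ` set xs" by (metis set_map)
      then have bts: "bt \<in> snd ` set xs'" using trip_mem[OF trt] by simp
      obtain v'' xs'' where "cyc F (insert t (insert K (\<sigma> ` S))) v'' xs''"
        using M0[OF c' tF shp(3) K(1) False K(3)[symmetric] okt(2) r(1) _ _ _ bts] K(2) r(3) by blast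
      moreover have "card S < card (insert t (insert K (\<sigma> ` S)))" using finS' shp cardS' False K by simp
      ultimately show ?thesis by blast
    qed
  qed
qed


lemma final:
  assumes surf: "simplicial_surface F" and c: "cyc F F v xs"
  shows "\<exists>w. facet_cycle F w"
proof -
  define n where "n = length xs"
  define vs where "vs = v # map snd xs"
  define w where "w = map (\<lambda>j. if even j then {vs ! (j div 2)} else fst (xs ! (j div 2))) [0..<2*n]"
  have n0: "n > 0" using c by (auto simp: cyc_def n_def)
  have lw: "length w = 2*n" by (simp add: w_def)
  have wn: "w ! i = (if even i then {vs ! (i div 2)} else fst (xs ! (i div 2)))" if "i < 2*n" for i
    using that by (simp add: w_def)
  have distS: "distinct (map fst xs)" and setS: "set (map fst xs) = F" and okS: "okw v xs"
    and lastv: "snd (last xs) = v"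
    using c by (auto simp: cyc_def)
  have tj: "vs ! j \<in> fst (xs!j) \<and> snd (xs!j) \<in> fst (xs!j) \<and> vs ! j \<noteq> snd (xs!j) \<and> fst (xs!j) \<in> F" if "j < n" for j
  proof -
    have "trip v xs ! j \<in> set (trip v xs)" using that by (simp add: trip_len n_def)
    then have "(vs ! j, fst (xs!j), snd (xs!j)) \<in> set (trip v xs)"
      using trip_nth[of j xs v] that by (simp add: n_def vs_def)
    moreover have "fst (xs!j) \<in> F" using setS that by (auto simp: n_def)
    ultimately show ?thesis using okS by (auto simp: okw_def)
  qed
  have nextv: "vs ! ((j+1) mod n) = snd (xs!j)" if "j < n" for j
  proof (cases "j + 1 < n")
    case True then show ?thesis by (simp add: vs_def n_def)
  next
    case False
    then have "j = n - 1" using that by simp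
    then have "snd (xs!j) = snd (last xs)" using n0 by (simp add: n_def last_conv_nth)
    moreover have "j + 1 = n" using False that by simp
    then have "(j+1) mod n = 0" by simp
    ultimately show ?thesis using lastv by (simp add: vs_def)
  qed
  have modl: "(2*j+2) mod (2*n) = 2 * ((j+1) mod n)" for j
    using mult_mod_right[of 2 "j+1" n] by simp
  have c3: "card f = 3" if "f \<in> F" for f using surf_c3[OF surf that] .
  have vnode: "{a} \<in> lattice_nodes F" if "a \<in> f" "f \<in> F" for a f
    using that by (auto simp: lattice_nodes_def poly_vertices_def)
  have fnode: "f \<in> lattice_nodes F" if "f \<in> F" for f
    using that by (auto simp: lattice_nodes_def)
  have psub: "{a} \<subset> f" if "a \<in> f" "f \<in> F" for a f
  proof -
    have "{a} \<noteq> f" using c3[OF that(2)] by auto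
    then show ?thesis using that by auto
  qed
  have "facet_cycle F w"
    unfolding facet_cycle_def Let_def lw
  proof (intro conjI allI impI ballI)
    show "0 < 2*n" using n0 by simp
    show "even (2*n)" by simp
  next
    fix i assume i: "i < 2*n"
    show "lattice_arc F (w ! i) (w ! ((i + 1) mod (2 * n)))"
    proof (cases "even i")
      case True
      define j where "j = i div 2"
      have ij: "i = 2*j" "j < n" using True i by (auto simp: j_def)
      have "(i+1) mod (2*n) = i + 1" using ij by simp
      then have "w ! ((i + 1) mod (2 * n)) = fst (xs!j)" using ij wn[of "i+1"] by simp
      moreover have "w ! i = {vs!j}" using ij wn[of i] by simp
      ultimately show ?thesis using tj[OF ij(2)] vnode fnode psub by (auto simp: lattice_arc_def)
    next
      case False
      define j where "j = i div 2"
      have ij: "i = 2*j+1" "j < n" using False i by (auto simp: j_def)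
      have "(i+1) mod (2*n) = 2 * ((j+1) mod n)" using ij modl by simp
      moreover have "2 * ((j+1) mod n) < 2*n" using n0 by simp
      ultimately have "w ! ((i + 1) mod (2 * n)) = {snd (xs!j)}" using wn nextv[OF ij(2)] by simp
      moreover have "w ! i = fst (xs!j)" using ij wn[of i] by simp
      ultimately show ?thesis using tj[OF ij(2)] vnode fnode psub by (auto simp: lattice_arc_def)
    qed
  next
    fix i assume i: "i < 2*n" "even i"
    define j where "j = i div 2"
    have ij: "i = 2*j" "j < n" using i by (auto simp: j_def)
    have wi: "w ! i = {vs!j}" using ij wn[of i] by simp
    show "is_vertex_node F (w ! i)" using wi tj[OF ij(2)] by (auto simp: is_vertex_node_def poly_vertices_def)
    have "(i+2) mod (2*n) = 2 * ((j+1) mod n)" using ij modl by simp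
    moreover have "2 * ((j+1) mod n) < 2*n" using n0 by simp
    ultimately have "w ! ((i + 2) mod (2 * n)) = {snd (xs!j)}" using wn nextv[OF ij(2)] by simp
    then show "w ! i \<noteq> w ! ((i + 2) mod (2 * n))" using wi tj[OF ij(2)] by simp
  next
    fix i assume i: "i < 2*n" "odd i"
    define j where "j = i div 2"
    have ij: "i = 2*j+1" "j < n" using i by (auto simp: j_def)
    show "w ! i \<in> F" using ij wn[of i] tj[OF ij(2)] by simp
  next
    fix f assume f: "f \<in> F"
    then obtain j0 where j0: "j0 < n" "fst (xs!j0) = f" using setS by (auto simp: n_def in_set_conv_nth)
    have "{i. i < 2 * n \<and> odd i \<and> w ! i = f} = {2*j0+1}"
    proof (intro set_eqI iffI)
      fix i assume "i \<in> {i. i < 2 * n \<and> odd i \<and> w ! i = f}"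
      then have i: "i < 2*n" "odd i" "w ! i = f" by auto
      define j where "j = i div 2"
      have ij: "i = 2*j+1" "j < n" using i by (auto simp: j_def)
      have "fst (xs!j) = fst (xs!j0)" using ij wn[of i] i j0 by simp
      then have "j = j0" using distS ij j0 by (simp add: n_def nth_eq_iff_index_eq[symmetric])
      then show "i \<in> {2*j0+1}" using ij by simp
    next
      fix i assume "i \<in> {2*j0+1}"
      then show "i \<in> {i. i < 2 * n \<and> odd i \<and> w ! i = f}" using j0 wn[of i] by auto
    qed
    then show "card {i. i < 2 * n \<and> odd i \<and> w ! i = f} = 1" by simp
  qed
  then show ?thesis by blast
qed

lemma grow:
  assumes surf: "simplicial_surface F"
  shows "cyc F S v xs \<Longrightarrow> \<exists>v xs. cyc F F v xs"
proof (induction "card F - card S" arbitrary: S v xs rule: less_induct)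
  case less
  show ?case
  proof (cases "S = F")
    case True then show ?thesis using less.prems by blast
  next
    case False
    obtain S' v' xs' where c': "cyc F S' v' xs'" and lt: "card S < card S'"
      using step[OF surf less.prems False] by blast
    have "S' \<subseteq> F" using c' by (simp add: cyc_def)
    then have "card S' \<le> card F" using surf_fin[OF surf] by (simp add: card_mono)
    then have "card F - card S' < card F - card S" using lt by simp
    then show ?thesis using less.hyps[OF _ c'] by simp
  qed
qed

theorem theorem3:
  fixes F :: "'a set set"
  assumes "simplicial_polyhedron_genus0 F"
  shows "\<exists>w. facet_cycle F w"
proof -
  have surf: "simplicial_surface F" using assms by (simp add: simplicial_polyhedron_genus0_def)
  have "F \<noteq> {}" using surf by (simp add: simplicial_surface_def)
  then obtain f where fF: "f \<in> F" by blast
  have cf: "card f = 3" using surf_c3[OF surf fF] .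
  then have "f \<noteq> {}" by auto
  then obtain a where a: "a \<in> f" by blast
  obtain b where b: "b \<in> f" "b \<noteq> a" using card3_third[OF cf, of a a] by blast
  have "{a,b} \<subseteq> f" "card {a,b} = 2" using a b by auto
  then obtain g where g: "g \<in> F" "{a,b} \<subseteq> g" "g \<noteq> f"
    using surf_other[OF surf fF] by blast
  have "okw a [(f,b),(g,a)]" using a b g by (simp add: okw_def)
  then have "cyc F {f,g} a [(f,b),(g,a)]"
    using g fF by (simp add: cyc_def)
  then have "\<exists>v xs. cyc F F v xs" by (rule grow[OF surf])
  then obtain v xs where "cyc F F v xs" by (elim exE)
  then show ?thesis by (rule final[OF surf])
qed

end
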